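(* Let $R$ be a unital $*$-ring, $p\in R$ a projection and $\phi:R\to pRp$ a unital $*$-ring isomorphism, and let $A=R[t_+,t_-,\phi]$ with its $\mathbb Z$-grading and involution. Then: (1) $R$ is proper if and only if $A$ is graded proper; (2) $R$ is positive definite if and only if $A$ is positive definite.
   Context: With $p_0=1$, $p_n=\phi^n(p_0)$, the corner skew Laurent polynomial ring $R[t_+,t_-,\phi]$ is the unital ring of formal expressions $t_-^m r_{-m}+\dots+t_-r_{-1}+r_0+r_1t_++\dots+r_nt_+^n$ with $r_{-i}\in p_iR$, $r_j\in Rp_j$, componentwise addition and multiplication determined by distributivity and $t_-t_+=1$, $t_+t_-=p$, $rt_-=t_-\phi(r)$, $t_+r=\phi(r)t_+$. It is $\mathbb Z$-graded with $A_0=R$, $A_n=Rp_nt_+^n$, $A_{-n}=t_-^np_nR$ ($n\ge1$), and has the involution extending that of $R$ additively by $(t_-^ir)^*=r^*t_+^i$, $(rt_+^i)^*=t_-^ir^*$. A projection is $p=p^2=p^*$. A $*$-ring is proper if $xx^*=0\Rightarrow x=0$, graded proper if this holds for homogeneous $x$, and positive definite if for all $n$ and $x_1,\dots,x_n$, $\sum_i x_ix_i^*=0$ implies all $x_i=0$. *)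

theory Defs
  imports Main
begin

definition star_ring :: "('a::ring_1 \<Rightarrow> 'a) \<Rightarrow> bool" where
  "star_ring s \<longleftrightarrow> (\<forall>x y. s (x + y) = s x + s y) \<and> (\<forall>x y. s (x * y) = s y * s x)
                    \<and> (\<forall>x. s (s x) = x)"

definition projection :: "('a::ring_1 \<Rightarrow> 'a) \<Rightarrow> 'a \<Rightarrow> bool" where
  "projection s p \<longleftrightarrow> p * p = p \<and> s p = p"

definition corner_iso :: "('a::ring_1 \<Rightarrow> 'a) \<Rightarrow> 'a \<Rightarrow> ('a \<Rightarrow> 'a) \<Rightarrow> bool" where
  "corner_iso s p \<phi> \<longleftrightarrow> (\<forall>x y. \<phi> (x + y) = \<phi> x + \<phi> y) \<and> (\<forall>x y. \<phi> (x * y) = \<phi> x * \<phi> y)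
      \<and> \<phi> 1 = p \<and> (\<forall>x. \<phi> (s x) = s (\<phi> x)) \<and> bij_betw \<phi> UNIV {p * x * p | x. True}"

definition proj_seq :: "('a::ring_1 \<Rightarrow> 'a) \<Rightarrow> nat \<Rightarrow> 'a" where
  "proj_seq \<phi> n = (\<phi> ^^ n) 1"

text \<open>An element t_-^m r_{-m} + ... + r_0 + ... + r_n t_+^n is represented by its
  coefficient function c :: int => R (c k = r_k), finitely supported, with
  r_{-i} in p_i R and r_j in R p_j.\<close>
definition cslp_carrier :: "('a::ring_1 \<Rightarrow> 'a) \<Rightarrow> (int \<Rightarrow> 'a) set" where
  "cslp_carrier \<phi> = {c. finite {k. c k \<noteq> 0}
      \<and> (\<forall>i::nat. 0 < i \<longrightarrow> c (- int i) = proj_seq \<phi> i * c (- int i))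
      \<and> (\<forall>j::nat. 0 < j \<longrightarrow> c (int j) = c (int j) * proj_seq \<phi> j)}"

text \<open>psi(x) = t_- x t_+ = phi^{-1}(p x p).\<close>
definition cslp_psi :: "'a::ring_1 \<Rightarrow> ('a \<Rightarrow> 'a) \<Rightarrow> 'a \<Rightarrow> 'a" where
  "cslp_psi p \<phi> x = inv_into UNIV \<phi> (p * x * p)"

text \<open>Coefficient of the product of the homogeneous element of degree i with
  coefficient a and the homogeneous element of degree j with coefficient b;
  the product is homogeneous of degree i + j.  This is the normal form obtained
  from distributivity and t_- t_+ = 1, t_+ t_- = p, r t_- = t_- phi(r),
  t_+ r = phi(r) t_+.\<close>
definition cslp_hmul :: "'a::ring_1 \<Rightarrow> ('a \<Rightarrow> 'a) \<Rightarrow> int \<Rightarrow> 'a \<Rightarrow> int \<Rightarrow> 'a \<Rightarrow> 'a" where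
  "cslp_hmul p \<phi> i a j b =
     (if 0 \<le> i \<and> 0 \<le> j then a * (\<phi> ^^ nat i) b
      else if i \<le> 0 \<and> j \<le> 0 then (\<phi> ^^ nat (- j)) a * b
      else if 0 < i \<and> j < 0 then
        (if nat (- j) \<le> nat i then a * (\<phi> ^^ (nat i - nat (- j))) b
         else (\<phi> ^^ (nat (- j) - nat i)) a * b)
      else
        (if nat j \<le> nat (- i) then proj_seq \<phi> (nat (- i) - nat j) * ((cslp_psi p \<phi>) ^^ nat j) (a * b)
         else ((cslp_psi p \<phi>) ^^ nat (- i)) (a * b) * proj_seq \<phi> (nat j - nat (- i))))"

definition cslp_mult :: "'a::ring_1 \<Rightarrow> ('a \<Rightarrow> 'a) \<Rightarrow> (int \<Rightarrow> 'a) \<Rightarrow> (int \<Rightarrow> 'a) \<Rightarrow> (int \<Rightarrow> 'a)" where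
  "cslp_mult p \<phi> c d = (\<lambda>k. \<Sum>i\<in>{i. c i \<noteq> 0}. cslp_hmul p \<phi> i (c i) (k - i) (d (k - i)))"

text \<open>Involution: (t_-^i r)^* = r^* t_+^i, (r t_+^i)^* = t_-^i r^*.\<close>
definition cslp_star :: "('a::ring_1 \<Rightarrow> 'a) \<Rightarrow> (int \<Rightarrow> 'a) \<Rightarrow> (int \<Rightarrow> 'a)" where
  "cslp_star s c = (\<lambda>k. s (c (- k)))"

definition cslp_homogeneous :: "(int \<Rightarrow> 'a::zero) \<Rightarrow> bool" where
  "cslp_homogeneous c \<longleftrightarrow> (\<exists>n. \<forall>k. k \<noteq> n \<longrightarrow> c k = 0)"

definition proper :: "('a::ring_1 \<Rightarrow> 'a) \<Rightarrow> bool" where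
  "proper s \<longleftrightarrow> (\<forall>x. x * s x = 0 \<longrightarrow> x = 0)"

definition positive_definite :: "('a::ring_1 \<Rightarrow> 'a) \<Rightarrow> bool" where
  "positive_definite s \<longleftrightarrow> (\<forall>xs. (\<Sum>x\<leftarrow>xs. x * s x) = 0 \<longrightarrow> (\<forall>x\<in>set xs. x = 0))"

definition cslp_graded_proper :: "('a::ring_1 \<Rightarrow> 'a) \<Rightarrow> 'a \<Rightarrow> ('a \<Rightarrow> 'a) \<Rightarrow> bool" where
  "cslp_graded_proper s p \<phi> \<longleftrightarrow>
     (\<forall>c\<in>cslp_carrier \<phi>. cslp_homogeneous c \<longrightarrow>
        cslp_mult p \<phi> c (cslp_star s c) = (\<lambda>_. 0) \<longrightarrow> c = (\<lambda>_. 0))"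

definition cslp_positive_definite :: "('a::ring_1 \<Rightarrow> 'a) \<Rightarrow> 'a \<Rightarrow> ('a \<Rightarrow> 'a) \<Rightarrow> bool" where
  "cslp_positive_definite s p \<phi> \<longleftrightarrow>
     (\<forall>xs. set xs \<subseteq> cslp_carrier \<phi> \<longrightarrow>
        (\<lambda>k. \<Sum>x\<leftarrow>xs. cslp_mult p \<phi> x (cslp_star s x) k) = (\<lambda>_. 0) \<longrightarrow>
        (\<forall>x\<in>set xs. x = (\<lambda>_. 0)))"

end

theory Submission
  imports Defs
begin

locale csl =
  fixes s :: "'a::ring_1 \<Rightarrow> 'a" and p :: 'a and \<phi> :: "'a \<Rightarrow> 'a"
  assumes sr: "star_ring s" and pr: "projection s p" and ci: "corner_iso s p \<phi>"
begin

lemma s_add: "s (x + y) = s x + s y" using sr unfolding star_ring_def by blast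
lemma s_mult: "s (x * y) = s y * s x" using sr unfolding star_ring_def by blast
lemma s_s: "s (s x) = x" using sr unfolding star_ring_def by blast
lemma s_0: "s 0 = 0" using s_add[of 0 0] by simp
lemma s_1: "s 1 = 1"
proof -
  have "s 1 = s 1 * s (s 1)" by (simp add: s_s)
  also have "\<dots> = s (s 1 * 1)" by (simp only: s_mult)
  also have "\<dots> = 1" by (simp add: s_s)
  finally show ?thesis .
qed

lemma ph_add: "\<phi> (x + y) = \<phi> x + \<phi> y" using ci unfolding corner_iso_def by blast
lemma ph_mult: "\<phi> (x * y) = \<phi> x * \<phi> y" using ci unfolding corner_iso_def by blast
lemma ph_1: "\<phi> 1 = p" using ci unfolding corner_iso_def by blast
lemma ph_s: "\<phi> (s x) = s (\<phi> x)" using ci unfolding corner_iso_def by blast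
lemma ph_bij: "bij_betw \<phi> UNIV {p * x * p | x. True}" using ci unfolding corner_iso_def by blast
lemma ph_0: "\<phi> 0 = 0" using ph_add[of 0 0] by simp
lemma ph_inj: "inj \<phi>" using ph_bij by (simp add: bij_betw_def)
lemma ph_range: "range \<phi> = {p * x * p | x. True}" using ph_bij by (simp add: bij_betw_def)
lemma pp: "p * p = p" using pr unfolding projection_def by blast

lemma p_ph: "p * \<phi> x = \<phi> x" "\<phi> x * p = \<phi> x"
proof -
  have "\<phi> x \<in> range \<phi>" by simp
  then obtain y where y: "\<phi> x = p * y * p" using ph_range by auto
  show "p * \<phi> x = \<phi> x" unfolding y by (simp add: mult.assoc[symmetric] pp)
  show "\<phi> x * p = \<phi> x" unfolding y by (simp add: mult.assoc pp)
qed

lemma ph_psi: "\<phi> (cslp_psi p \<phi> w) = p * w * p"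
proof -
  have "p * w * p \<in> range \<phi>" using ph_range by auto
  thus ?thesis unfolding cslp_psi_def by (simp add: f_inv_into_f)
qed

lemma phM_add: "(\<phi>^^n) (x + y) = (\<phi>^^n) x + (\<phi>^^n) y"
  by (induction n) (auto simp: ph_add)
lemma phM_mult: "(\<phi>^^n) (x * y) = (\<phi>^^n) x * (\<phi>^^n) y"
  by (induction n) (auto simp: ph_mult)
lemma phM_s: "(\<phi>^^n) (s x) = s ((\<phi>^^n) x)"
  by (induction n) (auto simp: ph_s)
lemma phM_0: "(\<phi>^^n) 0 = 0"
  by (induction n) (auto simp: ph_0)
lemma phM_inj: "inj (\<phi>^^n)"
  using ph_inj by (simp add: inj_fn)

lemma phM_sum: "(\<phi>^^n) (sum g A) = (\<Sum>i\<in>A. (\<phi>^^n) (g i))"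
proof (cases "finite A")
  case True thus ?thesis by (induction A rule: finite_induct) (auto simp: phM_0 phM_add)
next
  case False thus ?thesis by (simp add: phM_0)
qed

lemma phM_sum_list: "(\<phi>^^n) (\<Sum>x\<leftarrow>xs. g x) = (\<Sum>x\<leftarrow>xs. (\<phi>^^n) (g x))"
  by (induction xs) (auto simp: phM_0 phM_add)

lemma P_Suc: "proj_seq \<phi> (Suc m) = \<phi> (proj_seq \<phi> m)"
  by (simp add: proj_seq_def)

lemma P_idem: "proj_seq \<phi> m * proj_seq \<phi> m = proj_seq \<phi> m"
  unfolding proj_seq_def by (simp add: phM_mult[symmetric])

lemma P_s: "s (proj_seq \<phi> m) = proj_seq \<phi> m"
  unfolding proj_seq_def by (simp add: phM_s[symmetric] s_1)

lemma psi_inv: "w = proj_seq \<phi> m * w * proj_seq \<phi> m \<Longrightarrow>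
   (\<phi>^^m) ((cslp_psi p \<phi> ^^ m) w) = w"
proof (induction m arbitrary: w)
  case 0 thus ?case by simp
next
  case (Suc m)
  define q where "q = proj_seq \<phi> m"
  have w: "w = \<phi> q * w * \<phi> q" using Suc.prems P_Suc q_def by metis
  define z where "z = cslp_psi p \<phi> w"
  have pw: "p * w = w"
  proof -
    have "p * w = p * (\<phi> q * w * \<phi> q)" using w by metis
    also have "\<dots> = \<phi> q * w * \<phi> q" by (simp add: mult.assoc[symmetric] p_ph)
    finally show ?thesis by (metis w)
  qed
  have wp: "w * p = w"
  proof -
    have "w * p = (\<phi> q * w * \<phi> q) * p" using w by metis
    also have "\<dots> = \<phi> q * w * \<phi> q" by (simp add: mult.assoc p_ph)
    finally show ?thesis by (metis w)
  qed
  have phz: "\<phi> z = w" unfolding z_def ph_psi by (simp add: pw wp)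
  have "\<phi> (q * z * q) = \<phi> z" by (simp add: ph_mult phz w[symmetric])
  hence zq: "z = q * z * q" using ph_inj by (simp add: inj_eq)
  have "(\<phi>^^m) ((cslp_psi p \<phi> ^^ m) z) = z" using Suc.IH zq q_def by blast
  thus ?case
    unfolding funpow_Suc_right[of m "cslp_psi p \<phi>"] by (simp add: z_def[symmetric] phz)
qed

lemma key:
  assumes c: "c \<in> cslp_carrier \<phi>" and M: "nat (- i) \<le> M"
  shows "(\<phi>^^M) (cslp_hmul p \<phi> i (c i) (- i) (s (c i)))
     = (\<phi>^^(M - nat (- i))) (c i) * s ((\<phi>^^(M - nat (- i))) (c i))"
proof (cases "0 \<le> i")
  case True
  have "cslp_hmul p \<phi> i (c i) (- i) (s (c i)) = c i * s (c i)"
    using True unfolding cslp_hmul_def by auto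
  thus ?thesis using True by (simp add: phM_mult phM_s)
next
  case False
  define m where "m = nat (- i)"
  have m0: "0 < m" and im: "i = - int m" using False m_def by auto
  have h1: "cslp_hmul p \<phi> i (c i) (- i) (s (c i)) = (cslp_psi p \<phi> ^^ m) (c i * s (c i))"
    using False unfolding cslp_hmul_def m_def by (simp add: proj_seq_def)
  define q where "q = proj_seq \<phi> m"
  have cq: "c i = q * c i" using c m0 unfolding cslp_carrier_def q_def im by blast
  have scq: "s (c i) = s (c i) * q" using cq s_mult[of q "c i"] P_s q_def by metis
  have w: "c i * s (c i) = q * (c i * s (c i)) * q"
    by (metis cq scq mult.assoc)
  have "(\<phi>^^M) ((cslp_psi p \<phi> ^^ m) (c i * s (c i)))
      = (\<phi>^^(M - m)) ((\<phi>^^m) ((cslp_psi p \<phi> ^^ m) (c i * s (c i))))"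
  proof -
    have "(\<phi>^^M) = (\<phi>^^(M-m)) \<circ> (\<phi>^^m)" using M m_def by (metis funpow_add le_add_diff_inverse2)
    thus ?thesis by simp
  qed
  also have "\<dots> = (\<phi>^^(M - m)) (c i * s (c i))" using psi_inv w q_def by metis
  finally show ?thesis using h1 m_def by (simp add: phM_mult phM_s)
qed

lemma mult0: "cslp_mult p \<phi> c (cslp_star s c) 0
   = (\<Sum>i\<in>{i. c i \<noteq> 0}. cslp_hmul p \<phi> i (c i) (- i) (s (c i)))"
  unfolding cslp_mult_def cslp_star_def by simp

definition e :: "'a \<Rightarrow> int \<Rightarrow> 'a" where "e x = (\<lambda>k. if k = 0 then x else 0)"

lemma e_carrier: "e x \<in> cslp_carrier \<phi>"
proof -
  have "{k. e x k \<noteq> 0} \<subseteq> {0}" unfolding e_def by auto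
  hence "finite {k. e x k \<noteq> 0}" using finite_subset by blast
  thus ?thesis unfolding cslp_carrier_def e_def by auto
qed

lemma e_mult: "cslp_mult p \<phi> (e x) (cslp_star s (e x)) k = (if k = 0 then x * s x else 0)"
proof (cases "x = 0")
  case True thus ?thesis unfolding cslp_mult_def e_def by (simp add: s_0)
next
  case False
  have S: "{i. e x i \<noteq> 0} = {0}" using False unfolding e_def by auto
  show ?thesis unfolding cslp_mult_def S
    by (simp add: e_def cslp_star_def s_0 cslp_hmul_def phM_0)
qed

lemma PD_sum:
  assumes pd: "positive_definite s" and fin: "finite I"
    and z: "(\<Sum>i\<in>I. g i * s (g i)) = 0" and i: "i \<in> I"
  shows "g i = 0"
proof -
  obtain xs where xs: "set xs = I" "distinct xs" using finite_distinct_list fin by blast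
  have "(\<Sum>x\<leftarrow>map g xs. x * s x) = (\<Sum>j\<leftarrow>xs. g j * s (g j))"
    by (simp add: o_def)
  also have "\<dots> = 0" using z xs by (simp add: sum_list_distinct_conv_sum_set)
  finally have "\<forall>x\<in>set (map g xs). x = 0" using pd unfolding positive_definite_def by blast
  thus ?thesis using i xs by auto
qed

lemma part1: "proper s \<longleftrightarrow> cslp_graded_proper s p \<phi>"
proof
  assume P: "proper s"
  show "cslp_graded_proper s p \<phi>" unfolding cslp_graded_proper_def
  proof (intro ballI impI)
    fix c assume c: "c \<in> cslp_carrier \<phi>" and h: "cslp_homogeneous c"
      and z: "cslp_mult p \<phi> c (cslp_star s c) = (\<lambda>_. 0)"
    obtain n where n: "\<And>k. k \<noteq> n \<Longrightarrow> c k = 0" using h unfolding cslp_homogeneous_def by blast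
    show "c = (\<lambda>_. 0)"
    proof (cases "c n = 0")
      case True thus ?thesis using n by (intro ext) metis
    next
      case False
      have S: "{i. c i \<noteq> 0} = {n}" using False n by auto
      have "cslp_hmul p \<phi> n (c n) (- n) (s (c n)) = 0"
        using fun_cong[OF z, of 0] by (simp add: mult0 S)
      hence "(\<phi>^^nat (- n)) (cslp_hmul p \<phi> n (c n) (- n) (s (c n))) = 0" by (simp add: phM_0)
      hence "c n * s (c n) = 0" using key[OF c, of n "nat (- n)"] by simp
      hence "c n = 0" using P unfolding proper_def by blast
      thus ?thesis using False by simp
    qed
  qed
next
  assume G: "cslp_graded_proper s p \<phi>"
  show "proper s" unfolding proper_def
  proof (intro allI impI)
    fix x assume x: "x * s x = 0"
    have "cslp_homogeneous (e x)" unfolding cslp_homogeneous_def e_def by auto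
    moreover have "cslp_mult p \<phi> (e x) (cslp_star s (e x)) = (\<lambda>_. 0)"
      using x by (simp add: e_mult fun_eq_iff)
    ultimately have "e x = (\<lambda>_. 0)" using G e_carrier unfolding cslp_graded_proper_def by blast
    thus "x = 0" using fun_cong[of "e x" _ 0] unfolding e_def by simp
  qed
qed

lemma part2: "positive_definite s \<longleftrightarrow> cslp_positive_definite s p \<phi>"
proof
  assume pd: "positive_definite s"
  show "cslp_positive_definite s p \<phi>" unfolding cslp_positive_definite_def
  proof (intro allI impI)
    fix xs :: "(int \<Rightarrow> 'a) list"
    assume xs: "set xs \<subseteq> cslp_carrier \<phi>"
      and z: "(\<lambda>k. \<Sum>x\<leftarrow>xs. cslp_mult p \<phi> x (cslp_star s x) k) = (\<lambda>_. 0)"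
    define S where "S x = {i. x i \<noteq> (0::'a)}" for x :: "int \<Rightarrow> 'a"
    define T where "T x i = cslp_hmul p \<phi> i (x i) (- i) (s (x i))" for x i
    have finS: "finite (S x)" if "x \<in> set xs" for x
      using xs that unfolding cslp_carrier_def S_def by blast
    define I where "I = Sigma {..<length xs} (\<lambda>n. S (xs ! n))"
    have finI: "finite I" unfolding I_def using finS by auto
    define M where "M = Max ({0} \<union> (\<lambda>(n, i). nat (- i)) ` I)"
    have MI: "nat (- i) \<le> M" if "(n, i) \<in> I" for n i
      unfolding M_def using finI that by (intro Max_ge) force+
    have "(\<Sum>x\<leftarrow>xs. \<Sum>i\<in>S x. T x i) = 0"
      using fun_cong[OF z, of 0] by (simp add: mult0 S_def T_def)
    hence "(\<Sum>n<length xs. \<Sum>i\<in>S (xs ! n). T (xs ! n) i) = 0"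
      by (simp add: sum_list_sum_nth atLeast0LessThan)
    hence "(\<Sum>(n, i)\<in>I. T (xs ! n) i) = 0"
      unfolding I_def using finS by (subst sum.Sigma[symmetric]) auto
    hence "(\<phi>^^M) (\<Sum>(n, i)\<in>I. T (xs ! n) i) = 0" by (simp add: phM_0)
    hence "(\<Sum>(n, i)\<in>I. (\<phi>^^M) (T (xs ! n) i)) = 0"
      by (simp add: phM_sum case_prod_unfold)
    moreover define g where "g = (\<lambda>(n, i). (\<phi>^^(M - nat (- i))) ((xs ! n) i))"
    have "(\<phi>^^M) (T (xs ! n) i) = g (n, i) * s (g (n, i))" if "(n, i) \<in> I" for n i
    proof -
      have "xs ! n \<in> cslp_carrier \<phi>" using that xs unfolding I_def by auto
      thus ?thesis using key MI[OF that] unfolding g_def T_def by simp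
    qed
    ultimately have "(\<Sum>j\<in>I. g j * s (g j)) = 0"
      by (smt (verit) case_prod_unfold prod.collapse sum.cong)
    hence g0: "g j = 0" if "j \<in> I" for j using PD_sum[OF pd finI] that by blast
    show "\<forall>x\<in>set xs. x = (\<lambda>_. 0)"
    proof
      fix x assume "x \<in> set xs"
      then obtain n where n: "n < length xs" "xs ! n = x" by (auto simp: in_set_conv_nth)
      show "x = (\<lambda>_. 0)"
      proof
        fix i show "x i = 0"
        proof (rule ccontr)
          assume "x i \<noteq> 0"
          hence "(n, i) \<in> I" unfolding I_def S_def using n by auto
          hence "(\<phi>^^(M - nat (- i))) (x i) = 0" using g0 n unfolding g_def by fastforce
          hence "x i = 0" using phM_inj phM_0 by (metis injD)
          thus False using \<open>x i \<noteq> 0\<close> by simp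
        qed
      qed
    qed
  qed
next
  assume A: "cslp_positive_definite s p \<phi>"
  show "positive_definite s" unfolding positive_definite_def
  proof (intro allI impI)
    fix xs :: "'a list" assume z: "(\<Sum>x\<leftarrow>xs. x * s x) = 0"
    have "set (map e xs) \<subseteq> cslp_carrier \<phi>" using e_carrier by auto
    moreover have "(\<lambda>k. \<Sum>y\<leftarrow>map e xs. cslp_mult p \<phi> y (cslp_star s y) k) = (\<lambda>_. 0)"
    proof
      fix k
      have "(\<Sum>y\<leftarrow>map e xs. cslp_mult p \<phi> y (cslp_star s y) k)
          = (\<Sum>x\<leftarrow>xs. if k = 0 then x * s x else 0)" by (simp add: e_mult o_def)
      thus "(\<Sum>y\<leftarrow>map e xs. cslp_mult p \<phi> y (cslp_star s y) k) = 0"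
        using z by (cases "k = 0") auto
    qed
    ultimately have "\<forall>y\<in>set (map e xs). y = (\<lambda>_. 0)"
      using A unfolding cslp_positive_definite_def by blast
    thus "\<forall>x\<in>set xs. x = 0" unfolding e_def by (metis (mono_tags) image_eqI set_map)
  qed
qed

end

theorem mainTheorem10:
  fixes s :: "'a::ring_1 \<Rightarrow> 'a" and p :: 'a and \<phi> :: "'a \<Rightarrow> 'a"
  assumes "star_ring s" and "projection s p" and "corner_iso s p \<phi>"
  shows "(proper s \<longleftrightarrow> cslp_graded_proper s p \<phi>)
       \<and> (positive_definite s \<longleftrightarrow> cslp_positive_definite s p \<phi>)"
proof -
  interpret csl s p \<phi> using assms by unfold_locales
  show ?thesis using part1 part2 by blast
qed

end
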